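(* Let $W$ be a complex vector space. Every $\mathcal{S}_{trig}$-local subset of $\mathcal{E}(W)$ is compatible, and every quasi $\mathcal{S}_{trig}$-local subset of $\mathcal{E}(W)$ is quasi compatible.
   Context: $\mathcal{E}(W)=\mathrm{Hom}(W,W((x)))$; $\mathbb{C}(x)$ the rational function field; $\iota_{x_2,x_1}$ expansion in $\mathbb{C}((x_2))((x_1))$. $U\subset\mathcal{E}(W)$ is $\mathcal{S}_{trig}$-local if for any $a(x),b(x)\in U$ there exist $u_i(x),v_i(x)\in U$, $q_i(x)\in\mathbb{C}(x)$ ($i=1,\dots,r$), $k\in\mathbb{N}$ with $(x_1-x_2)^ka(x_1)b(x_2)=(x_1-x_2)^k\sum_i\iota_{x_2,x_1}(q_i(x_1/x_2))u_i(x_2)v_i(x_1)$; quasi $\mathcal{S}_{trig}$-local if instead $p(x_1/x_2)a(x_1)b(x_2)=p(x_1/x_2)\sum_i\iota_{x_2,x_1}(q_i(x_1/x_2))u_i(x_2)v_i(x_1)$ for some nonzero polynomial $p$. A finite sequence $a_1,\dots,a_r$ in $\mathcal{E}(W)$ is compatible if $\prod_{i<j}(x_i-x_j)^ka_1(x_1)\cdots a_r(x_r)\in\mathrm{Hom}(W,W((x_1,\dots,x_r)))$ for some $k\in\mathbb{N}$, quasi compatible if $\prod_{i<j}p(x_i,x_j)a_1(x_1)\cdots a_r(x_r)\in\mathrm{Hom}(W,W((x_1,\dots,x_r)))$ for some nonzero $p\in\mathbb{C}[[x,y]]$; a subset is (quasi) compatible if all its finite sequences are. *)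

theory Defs
  imports Main "HOL-Computational_Algebra.Formal_Laurent_Series"
begin

text \<open>
  W is a complex vector space, given as an additive group 'w with a
  scalar multiplication scale :: complex => 'w => 'w satisfying vector_space scale.
  An element a(x) of E(W) = Hom(W, W((x))) is encoded by its coefficient maps:
  a n is the coefficient of x^n (an endomorphism of W), a(x) w = sum_n (a n w) x^n.
  Formal series in several variables with values in W are encoded by their
  coefficient functions (on int exponents); products of series with scalar series
  are computed coefficientwise; the coefficient sums below are taken over the
  (in all relevant situations finite) support of the summand.
\<close>

type_synonym 'w fser = "int \<Rightarrow> 'w \<Rightarrow> 'w"

definition EW :: "(complex \<Rightarrow> 'w::ab_group_add \<Rightarrow> 'w) \<Rightarrow> 'w fser set" where
  "EW scale = {a. (\<forall>n. Vector_Spaces.linear scale scale (a n))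
                   \<and> (\<forall>w. \<exists>N. \<forall>n<N. a n w = 0)}"

text \<open>Coefficients of a(x1) b(x2) w, indexed by (exponent of x1, exponent of x2).\<close>
definition prod12 :: "'w fser \<Rightarrow> 'w fser \<Rightarrow> 'w \<Rightarrow> int \<Rightarrow> int \<Rightarrow> 'w" where
  "prod12 a b w m1 m2 = a m1 (b m2 w)"

text \<open>Coefficients of u(x2) v(x1) w, indexed by (exponent of x1, exponent of x2).\<close>
definition prod21 :: "'w fser \<Rightarrow> 'w fser \<Rightarrow> 'w \<Rightarrow> int \<Rightarrow> int \<Rightarrow> 'w" where
  "prod21 u v w m1 m2 = u m2 (v m1 w)"

text \<open>Multiplication of a W-valued series in x1,x2 by the scalar series
  sum c d1 d2 x1^d1 x2^d2.\<close>
definition mult2 :: "(complex \<Rightarrow> 'w::ab_group_add \<Rightarrow> 'w) \<Rightarrow> (int \<Rightarrow> int \<Rightarrow> complex)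
    \<Rightarrow> (int \<Rightarrow> int \<Rightarrow> 'w) \<Rightarrow> int \<Rightarrow> int \<Rightarrow> 'w" where
  "mult2 scale c G m1 m2 =
     (\<Sum>(d1,d2)\<in>{(d1,d2). c d1 d2 \<noteq> 0 \<and> G (m1 - d1) (m2 - d2) \<noteq> 0}.
        scale (c d1 d2) (G (m1 - d1) (m2 - d2)))"

text \<open>Coefficients of (x1 - x2)^k.\<close>
definition binom2 :: "nat \<Rightarrow> int \<Rightarrow> int \<Rightarrow> complex" where
  "binom2 k d1 d2 = (if 0 \<le> d1 \<and> 0 \<le> d2 \<and> d1 + d2 = int k
                     then (-1) ^ nat d2 * of_nat (k choose nat d2) else 0)"

text \<open>Coefficients of p(x1/x2) for a polynomial p.\<close>
definition polyz :: "complex poly \<Rightarrow> int \<Rightarrow> int \<Rightarrow> complex" where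
  "polyz p d1 d2 = (if 0 \<le> d1 \<and> d2 = - d1 then coeff p (nat d1) else 0)"

definition rat_expand :: "complex poly \<Rightarrow> complex poly \<Rightarrow> complex fls" where
  "rat_expand f g = fps_to_fls (fps_of_poly f) / fps_to_fls (fps_of_poly g)"

text \<open>Coefficients of iota_{x2,x1}(q(x1/x2)) in C((x2))((x1)), q = f/g:
  if q(z) = sum c_n z^n (Laurent expansion at 0) this is sum c_n x1^n x2^(-n).\<close>
definition iota21 :: "complex poly \<Rightarrow> complex poly \<Rightarrow> int \<Rightarrow> int \<Rightarrow> complex" where
  "iota21 f g d1 d2 = (if d2 = - d1 then fls_nth (rat_expand f g) d1 else 0)"

text \<open>S_trig-locality.  A rational function q_i is given as f i / g i with g i nonzero.\<close>
definition strig_local :: "(complex \<Rightarrow> 'w::ab_group_add \<Rightarrow> 'w) \<Rightarrow> 'w fser set \<Rightarrow> bool" where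
  "strig_local scale U \<longleftrightarrow>
    (\<forall>a\<in>U. \<forall>b\<in>U. \<exists>(r::nat) (u::nat \<Rightarrow> 'w fser) (v::nat \<Rightarrow> 'w fser)
        (f::nat \<Rightarrow> complex poly) (g::nat \<Rightarrow> complex poly) (k::nat).
       (\<forall>i<r. u i \<in> U \<and> v i \<in> U \<and> g i \<noteq> 0) \<and>
       (\<forall>w m1 m2. mult2 scale (binom2 k) (prod12 a b w) m1 m2 =
           mult2 scale (binom2 k)
             (\<lambda>n1 n2. \<Sum>i<r. mult2 scale (iota21 (f i) (g i)) (prod21 (u i) (v i) w) n1 n2)
             m1 m2))"

definition quasi_strig_local :: "(complex \<Rightarrow> 'w::ab_group_add \<Rightarrow> 'w) \<Rightarrow> 'w fser set \<Rightarrow> bool" where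
  "quasi_strig_local scale U \<longleftrightarrow>
    (\<forall>a\<in>U. \<forall>b\<in>U. \<exists>(p::complex poly) (r::nat) (u::nat \<Rightarrow> 'w fser) (v::nat \<Rightarrow> 'w fser)
        (f::nat \<Rightarrow> complex poly) (g::nat \<Rightarrow> complex poly).
       p \<noteq> 0 \<and>
       (\<forall>i<r. u i \<in> U \<and> v i \<in> U \<and> g i \<noteq> 0) \<and>
       (\<forall>w m1 m2. mult2 scale (polyz p) (prod12 a b w) m1 m2 =
           mult2 scale (polyz p)
             (\<lambda>n1 n2. \<Sum>i<r. mult2 scale (iota21 (f i) (g i)) (prod21 (u i) (v i) w) n1 n2)
             m1 m2))"

text \<open>Several variables x_0,...,x_(r-1): series are functions of exponent lists of
  length r.  Coefficients of a_0(x_0) ... a_(r-1)(x_(r-1)) w.\<close>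
definition prodr :: "'w fser list \<Rightarrow> 'w \<Rightarrow> int list \<Rightarrow> 'w" where
  "prodr as w ns = foldr (\<lambda>(a, n) v. a n v) (zip as ns) w"

text \<open>Multiplication by the scalar series sum c d1 d2 x_i^d1 x_j^d2.\<close>
definition mult_pair :: "(complex \<Rightarrow> 'w::ab_group_add \<Rightarrow> 'w) \<Rightarrow> (int \<Rightarrow> int \<Rightarrow> complex)
    \<Rightarrow> nat \<Rightarrow> nat \<Rightarrow> (int list \<Rightarrow> 'w) \<Rightarrow> int list \<Rightarrow> 'w" where
  "mult_pair scale c i j G ns =
     (\<Sum>(d1,d2)\<in>{(d1,d2). c d1 d2 \<noteq> 0 \<and> G (ns[i := ns ! i - d1, j := ns ! j - d2]) \<noteq> 0}.
        scale (c d1 d2) (G (ns[i := ns ! i - d1, j := ns ! j - d2])))"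

text \<open>Multiplication by prod_{i<j<r} c(x_i, x_j).\<close>
definition mult_all_pairs :: "(complex \<Rightarrow> 'w::ab_group_add \<Rightarrow> 'w) \<Rightarrow> (int \<Rightarrow> int \<Rightarrow> complex)
    \<Rightarrow> nat \<Rightarrow> (int list \<Rightarrow> 'w) \<Rightarrow> int list \<Rightarrow> 'w" where
  "mult_all_pairs scale c r G =
     fold (\<lambda>(i, j) H. mult_pair scale c i j H) [(i, j). i \<leftarrow> [0..<r], j \<leftarrow> [Suc i..<r]] G"

text \<open>Membership in W((x_0,...,x_(r-1))) for every w: a uniform lower bound on all exponents.\<close>
definition lower_trunc :: "nat \<Rightarrow> ('w \<Rightarrow> int list \<Rightarrow> 'w::zero) \<Rightarrow> bool" where
  "lower_trunc r F \<longleftrightarrow> (\<forall>w. \<exists>N. \<forall>ns. length ns = r \<longrightarrow> (\<exists>i<r. ns ! i < N) \<longrightarrow> F w ns = 0)"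

definition compatible_seq :: "(complex \<Rightarrow> 'w::ab_group_add \<Rightarrow> 'w) \<Rightarrow> 'w fser list \<Rightarrow> bool" where
  "compatible_seq scale as \<longleftrightarrow>
    (\<exists>k::nat. lower_trunc (length as)
        (\<lambda>w. mult_all_pairs scale (binom2 k) (length as) (prodr as w)))"

text \<open>Power series p in C[[x,y]], given by its coefficients p a b of x^a y^b.\<close>
definition pser2 :: "(nat \<Rightarrow> nat \<Rightarrow> complex) \<Rightarrow> int \<Rightarrow> int \<Rightarrow> complex" where
  "pser2 p d1 d2 = (if 0 \<le> d1 \<and> 0 \<le> d2 then p (nat d1) (nat d2) else 0)"

definition quasi_compatible_seq :: "(complex \<Rightarrow> 'w::ab_group_add \<Rightarrow> 'w) \<Rightarrow> 'w fser list \<Rightarrow> bool" where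
  "quasi_compatible_seq scale as \<longleftrightarrow>
    (\<exists>p::nat \<Rightarrow> nat \<Rightarrow> complex. (\<exists>a b. p a b \<noteq> 0) \<and> lower_trunc (length as)
        (\<lambda>w. mult_all_pairs scale (pser2 p) (length as) (prodr as w)))"

definition compatible_set :: "(complex \<Rightarrow> 'w::ab_group_add \<Rightarrow> 'w) \<Rightarrow> 'w fser set \<Rightarrow> bool" where
  "compatible_set scale U \<longleftrightarrow> (\<forall>as. set as \<subseteq> U \<longrightarrow> compatible_seq scale as)"

definition quasi_compatible_set :: "(complex \<Rightarrow> 'w::ab_group_add \<Rightarrow> 'w) \<Rightarrow> 'w fser set \<Rightarrow> bool" where
  "quasi_compatible_set scale U \<longleftrightarrow> (\<forall>as. set as \<subseteq> U \<longrightarrow> quasi_compatible_seq scale as)"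

end

theory Submission
  imports Defs
begin

definition supp2 :: "(int \<Rightarrow> int \<Rightarrow> 'a::zero) \<Rightarrow> (int \<times> int) set" where
  "supp2 c = {d. c (fst d) (snd d) \<noteq> 0}"

definition fs :: "(int \<Rightarrow> int \<Rightarrow> 'a::zero) \<Rightarrow> bool" where
  "fs c \<longleftrightarrow> finite (supp2 c)"

definition sub :: "int list \<Rightarrow> nat \<Rightarrow> int \<Rightarrow> int list" where
  "sub ns i d = ns[i := ns ! i - d]"

definition ss :: "int list \<Rightarrow> nat \<Rightarrow> nat \<Rightarrow> int \<times> int \<Rightarrow> int list" where
  "ss ns i j d = sub (sub ns i (fst d)) j (snd d)"

definition Mp :: "(complex \<Rightarrow> 'w::ab_group_add \<Rightarrow> 'w) \<Rightarrow> (int \<Rightarrow> int \<Rightarrow> complex)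
    \<Rightarrow> nat \<Rightarrow> nat \<Rightarrow> (int list \<Rightarrow> 'w) \<Rightarrow> int list \<Rightarrow> 'w" where
  "Mp s c i j G ns = (\<Sum>d\<in>supp2 c. s (c (fst d) (snd d)) (G (ss ns i j d)))"

definition conv :: "(int \<Rightarrow> int \<Rightarrow> complex) \<Rightarrow> (int \<Rightarrow> int \<Rightarrow> complex) \<Rightarrow> int \<Rightarrow> int \<Rightarrow> complex" where
  "conv c c' f1 f2 = (\<Sum>d\<in>supp2 c. c (fst d) (snd d) * c' (f1 - fst d) (f2 - snd d))"

definition bnd :: "nat \<Rightarrow> nat \<Rightarrow> (int list \<Rightarrow> 'w::zero) \<Rightarrow> bool" where
  "bnd r l G \<longleftrightarrow> (\<exists>N. \<forall>ns. length ns = r \<longrightarrow> ns ! l < N \<longrightarrow> G ns = 0)"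

definition eqon :: "nat \<Rightarrow> (int list \<Rightarrow> 'w) \<Rightarrow> (int list \<Rightarrow> 'w) \<Rightarrow> bool" where
  "eqon r G H \<longleftrightarrow> (\<forall>ns. length ns = r \<longrightarrow> G ns = H ns)"

lemma length_sub[simp]: "length (sub ns i d) = length ns"
  by (simp add: sub_def)

lemma length_ss[simp]: "length (ss ns i j d) = length ns"
  by (simp add: ss_def)

lemma nth_sub: "sub ns i d ! l = (if l = i \<and> i < length ns then ns ! l - d else ns ! l)"
  by (auto simp: sub_def nth_list_update list_update_beyond)

lemma sub_comm: "sub (sub ns i a) k b = sub (sub ns k b) i a"
  by (rule nth_equalityI) (auto simp: nth_sub)

lemma sub_sub_same: "sub (sub ns i a) i b = sub ns i (a + b)"
  by (rule nth_equalityI) (auto simp: nth_sub)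

lemma ss_comm: "ss (ss ns i j d) k l e = ss (ss ns k l e) i j d"
  unfolding ss_def by (metis sub_comm)

lemma ss_add: "ss (ss ns i j d) i j e = ss ns i j (fst d + fst e, snd d + snd e)"
  unfolding ss_def by (metis sub_comm sub_sub_same fst_conv snd_conv)

lemma fs_finite: "fs c \<Longrightarrow> finite (supp2 c)" by (simp add: fs_def)

lemma fin_bound:
  assumes "finite T" "\<forall>t\<in>T. \<exists>N::int. P t N" "\<And>t N N'. N' \<le> N \<Longrightarrow> P t N \<Longrightarrow> P t N'"
  shows "\<exists>N. \<forall>t\<in>T. P t N"
  using assms(1,2)
proof (induction T rule: finite_induct)
  case empty then show ?case by auto
next
  case (insert x F)
  then obtain N1 where "P x N1" by auto
  moreover from insert obtain N2 where "\<forall>t\<in>F. P t N2" by auto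
  ultimately show ?case
    by (intro exI[of _ "min N1 N2"]) (auto intro: assms(3)[rotated])
qed

lemma fs_negbound:
  assumes "fs c"
  shows "\<exists>D\<ge>0. \<forall>d\<in>supp2 c. - fst d \<le> D \<and> - snd d \<le> D"
proof -
  let ?A = "insert 0 ((\<lambda>d. max (- fst d) (- snd d)) ` supp2 c)"
  have "finite ?A" using assms by (simp add: fs_def)
  have "max (- fst d) (- snd d) \<le> Max ?A" if "d \<in> supp2 c" for d
    using \<open>finite ?A\<close> that by (intro Max_ge) auto
  moreover have "0 \<le> Max ?A" using \<open>finite ?A\<close> by (intro Max_ge) auto
  ultimately show ?thesis
    by (intro exI[of _ "Max ?A"]) fastforce
qed

lemma nth_sub_le: "- d \<le> D \<Longrightarrow> 0 \<le> D \<Longrightarrow> sub ns i d ! l \<le> ns ! l + D"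
  by (auto simp: nth_sub)

lemma nth_ss_le:
  assumes "- fst d \<le> D" "- snd d \<le> D" "0 \<le> D"
  shows "ss ns i j d ! l \<le> ns ! l + 2 * D"
proof -
  have "ss ns i j d ! l \<le> sub ns i (fst d) ! l + D"
    unfolding ss_def using assms by (intro nth_sub_le) auto
  also have "\<dots> \<le> ns ! l + D + D" using nth_sub_le[of "fst d" D ns i l] assms by simp
  finally show ?thesis by simp
qed

definition Mfold :: "(complex \<Rightarrow> 'w::ab_group_add \<Rightarrow> 'w) \<Rightarrow> (int \<Rightarrow> int \<Rightarrow> complex)
    \<Rightarrow> (nat \<times> nat) list \<Rightarrow> (int list \<Rightarrow> 'w) \<Rightarrow> int list \<Rightarrow> 'w" where
  "Mfold s c ps G = fold (\<lambda>p H. Mp s c (fst p) (snd p) H) ps G"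

lemma Mfold_Nil[simp]: "Mfold s c [] G = G"
  by (simp add: Mfold_def)

lemma Mfold_Cons[simp]: "Mfold s c (p # ps) G = Mfold s c ps (Mp s c (fst p) (snd p) G)"
  by (simp add: Mfold_def)

lemma Mfold_append: "Mfold s c (ps @ qs) G = Mfold s c qs (Mfold s c ps G)"
  by (simp add: Mfold_def)

definition Pre :: "'w fser \<Rightarrow> (int list \<Rightarrow> 'w) \<Rightarrow> int list \<Rightarrow> 'w::zero" where
  "Pre a Y ns = (case ns of [] \<Rightarrow> 0 | n # t \<Rightarrow> a n (Y t))"

lemma prodr_Cons[simp]: "prodr (a # as) w (n # ns) = a n (prodr as w ns)"
  by (simp add: prodr_def)

lemma prodr_Nil[simp]: "prodr [] w ns = w"
  by (simp add: prodr_def)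

definition pairs :: "nat \<Rightarrow> (nat \<times> nat) list" where
  "pairs r = [(i, j). i \<leftarrow> [0..<r], j \<leftarrow> [Suc i..<r]]"

lemma pairs_Suc:
  "pairs (Suc r) = map (\<lambda>j. (0, j)) [1..<Suc r] @ map (\<lambda>p. (Suc (fst p), Suc (snd p))) (pairs r)"
proof -
  have a: "[0..<Suc r] = 0 # map Suc [0..<r]" by (simp add: map_Suc_upt upt_conv_Cons del: upt_Suc)
  have b: "[Suc (Suc i)..<Suc r] = map Suc [Suc i..<r]" for i by (simp add: map_Suc_upt del: upt_Suc)
  show ?thesis
    unfolding pairs_def a
    apply (simp only: list.map concat.simps map_map comp_def b)
    apply (simp add: map_concat comp_def del: upt_Suc)
    done
qed

lemma set_pairs: "p \<in> set (pairs r) \<Longrightarrow> fst p < snd p \<and> snd p < r"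
  unfolding pairs_def by (cases p) (force simp: set_concat)

definition M0 :: "(complex \<Rightarrow> 'w::ab_group_add \<Rightarrow> 'w) \<Rightarrow> (int \<Rightarrow> int \<Rightarrow> complex)
    \<Rightarrow> nat \<Rightarrow> (int list \<Rightarrow> 'w) \<Rightarrow> int list \<Rightarrow> 'w" where
  "M0 s c r G = Mfold s c (map (\<lambda>j. (0, j)) [1..<r]) G"

definition AP :: "(complex \<Rightarrow> 'w::ab_group_add \<Rightarrow> 'w) \<Rightarrow> (int \<Rightarrow> int \<Rightarrow> complex)
    \<Rightarrow> nat \<Rightarrow> (int list \<Rightarrow> 'w) \<Rightarrow> int list \<Rightarrow> 'w" where
  "AP s c r G = Mfold s c (pairs r) G"

lemma AP_Suc: "AP s c (Suc r) G =
   Mfold s c (map (\<lambda>p. (Suc (fst p), Suc (snd p))) (pairs r)) (M0 s c (Suc r) G)"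
  by (simp add: AP_def M0_def pairs_Suc Mfold_append)

lemma bnd_eqon: "eqon r G H \<Longrightarrow> bnd r l G \<Longrightarrow> bnd r l H"
  by (auto simp: eqon_def bnd_def)



definition Phi :: "(complex \<Rightarrow> 'w::ab_group_add \<Rightarrow> 'w) \<Rightarrow> 'w fser \<Rightarrow> (int \<Rightarrow> int \<Rightarrow> complex)
    \<Rightarrow> (int list \<Rightarrow> 'w) \<Rightarrow> int list \<Rightarrow> 'w" where
  "Phi s u q X ns = mult2 s q (\<lambda>a b. u b (X (a # drop 2 ns))) (ns ! 0) (ns ! 1)"

definition pwb :: "nat \<Rightarrow> (int list \<Rightarrow> 'w::zero) \<Rightarrow> bool" where
  "pwb n X \<longleftrightarrow> (\<forall>t. length t = n \<longrightarrow> (\<exists>N. \<forall>a<N. X (a # t) = 0))"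

definition qprop :: "(int \<Rightarrow> int \<Rightarrow> complex) \<Rightarrow> bool" where
  "qprop q \<longleftrightarrow> (\<exists>L. \<forall>d1 d2. q d1 d2 \<noteq> 0 \<longrightarrow> d2 = - d1 \<and> L \<le> d1)"

locale cvs = vector_space scale for scale :: "complex \<Rightarrow> 'w::ab_group_add \<Rightarrow> 'w"
context cvs
begin

lemma Mp_superset:
  assumes "finite T" "supp2 c \<subseteq> T"
  shows "Mp scale c i j G ns = (\<Sum>d\<in>T. scale (c (fst d) (snd d)) (G (ss ns i j d)))"
  unfolding Mp_def
  by (rule sum.mono_neutral_left) (use assms in \<open>auto simp: supp2_def\<close>)

lemma mult_pair_Mp:
  assumes "fs c" "i \<noteq> j"
  shows "mult_pair scale c i j G ns = Mp scale c i j G ns"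
proof -
  have e: "ns[i := ns ! i - d1, j := ns ! j - d2] = ss ns i j (d1, d2)" for d1 d2
    using assms(2) by (simp add: ss_def sub_def nth_list_update)
  show ?thesis
    unfolding mult_pair_def Mp_def e
    apply (rule sum.mono_neutral_cong_left)
    using assms(1) by (auto simp: fs_def supp2_def)
qed

lemma mult2_Mp:
  assumes "fs c"
  shows "mult2 scale c K m1 m2 = Mp scale c 0 1 (\<lambda>ns. K (ns ! 0) (ns ! 1)) (m1 # m2 # t)"
proof -
  have e: "ss (m1 # m2 # t) 0 1 d = (m1 - fst d) # (m2 - snd d) # t" for d
    by (simp add: ss_def sub_def)
  show ?thesis
    unfolding mult2_def Mp_def e
    apply (rule sum.mono_neutral_cong_left)
    using assms(1) by (auto simp: fs_def supp2_def)
qed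

lemma Mp01_mult2:
  assumes "fs c"
  shows "Mp scale c 0 1 G (m1 # m2 # t) = mult2 scale c (\<lambda>a b. G (a # b # t)) m1 m2"
proof -
  have e: "ss (m1 # m2 # t) 0 1 d = (m1 - fst d) # (m2 - snd d) # t" for d
    by (simp add: ss_def sub_def)
  show ?thesis
    unfolding mult2_def Mp_def e
    apply (rule sum.mono_neutral_cong_right)
    using assms(1) by (auto simp: fs_def supp2_def)
qed

lemma Mp_comm:
  assumes "fs c" "fs c'"
  shows "Mp scale c i j (Mp scale c' k l G) = Mp scale c' k l (Mp scale c i j G)"
proof (rule ext)
  fix ns
  show "Mp scale c i j (Mp scale c' k l G) ns = Mp scale c' k l (Mp scale c i j G) ns"
    unfolding Mp_def scale_sum_right scale_scale
    apply (subst sum.swap)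
    apply (rule sum.cong, rule refl)+
    by (simp add: ss_comm mult.commute)
qed

lemma Mp_compose:
  assumes "fs c" "fs c'"
  shows "Mp scale c i j (Mp scale c' i j G) ns = Mp scale (conv c c') i j G ns"
proof -
  let ?S = "supp2 c" and ?S' = "supp2 c'"
  let ?pl = "\<lambda>(d::int\<times>int) (e::int\<times>int). (fst d + fst e, snd d + snd e)"
  define T where "T = (\<lambda>p. ?pl (fst p) (snd p)) ` (?S \<times> ?S')"
  have fS: "finite ?S" "finite ?S'" using assms by (auto simp: fs_def)
  have fT: "finite T" unfolding T_def using fS by auto
  have sT: "supp2 (conv c c') \<subseteq> T"
  proof
    fix f assume "f \<in> supp2 (conv c c')"
    then have "(\<Sum>d\<in>?S. c (fst d) (snd d) * c' (fst f - fst d) (snd f - snd d)) \<noteq> 0"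
      by (simp add: supp2_def conv_def)
    then obtain d where d: "d \<in> ?S" "c' (fst f - fst d) (snd f - snd d) \<noteq> 0"
      by (metis (no_types, lifting) mult_zero_right sum.neutral)
    then have "(fst f - fst d, snd f - snd d) \<in> ?S'" by (simp add: supp2_def)
    with d(1) show "f \<in> T" unfolding T_def
      by (intro image_eqI[of _ _ "(d, (fst f - fst d, snd f - snd d))"]) auto
  qed
  have "Mp scale (conv c c') i j G ns =
        (\<Sum>f\<in>T. scale (conv c c' (fst f) (snd f)) (G (ss ns i j f)))"
    by (rule Mp_superset[OF fT sT])
  also have "\<dots> = (\<Sum>f\<in>T. \<Sum>d\<in>?S. scale (c (fst d) (snd d) * c' (fst f - fst d) (snd f - snd d)) (G (ss ns i j f)))"
    by (simp add: conv_def scale_sum_left)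
  also have "\<dots> = (\<Sum>d\<in>?S. \<Sum>f\<in>T. scale (c (fst d) (snd d) * c' (fst f - fst d) (snd f - snd d)) (G (ss ns i j f)))"
    by (rule sum.swap)
  also have "\<dots> = (\<Sum>d\<in>?S. \<Sum>e\<in>?S'. scale (c (fst d) (snd d) * c' (fst e) (snd e)) (G (ss (ss ns i j d) i j e)))"
  proof (rule sum.cong[OF refl])
    fix d assume dS: "d \<in> ?S"
    let ?h = "\<lambda>e. ?pl d e"
    have inj: "inj_on ?h ?S'" by (auto simp: inj_on_def prod_eq_iff)
    have sub: "?h ` ?S' \<subseteq> T" using dS unfolding T_def by force
    have "(\<Sum>f\<in>T. scale (c (fst d) (snd d) * c' (fst f - fst d) (snd f - snd d)) (G (ss ns i j f)))
        = (\<Sum>f\<in>?h ` ?S'. scale (c (fst d) (snd d) * c' (fst f - fst d) (snd f - snd d)) (G (ss ns i j f)))"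
      apply (rule sum.mono_neutral_right[OF fT sub])
      apply clarify
      subgoal for a b
        apply (subgoal_tac "(a - fst d, b - snd d) \<notin> ?S'")
         apply (simp add: supp2_def)
        by (force simp: image_iff)
      done
    also have "\<dots> = (\<Sum>e\<in>?S'. scale (c (fst d) (snd d) * c' (fst e) (snd e)) (G (ss (ss ns i j d) i j e)))"
      by (subst sum.reindex[OF inj]) (simp add: ss_add)
    finally show "(\<Sum>f\<in>T. scale (c (fst d) (snd d) * c' (fst f - fst d) (snd f - snd d)) (G (ss ns i j f)))
        = (\<Sum>e\<in>?S'. scale (c (fst d) (snd d) * c' (fst e) (snd e)) (G (ss (ss ns i j d) i j e)))" .
  qed
  also have "\<dots> = Mp scale c i j (Mp scale c' i j G) ns"
    unfolding Mp_def scale_sum_right scale_scale by (simp add: mult.commute)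
  finally show ?thesis by simp
qed


lemma lin_sum_scale:
  assumes "Vector_Spaces.linear scale scale f"
  shows "f (\<Sum>k\<in>K. scale (c k) (x k)) = (\<Sum>k\<in>K. scale (c k) (f (x k)))"
proof -
  have m: "module_hom scale scale f" using assms by (simp add: module_hom_iff_linear)
  show ?thesis by (simp add: module_hom.sum[OF m] module_hom.scale[OF m])
qed

lemma lin_zero:
  assumes "Vector_Spaces.linear scale scale f"
  shows "f 0 = 0"
proof -
  have m: "module_hom scale scale f" using assms by (simp add: module_hom_iff_linear)
  show ?thesis using module_hom.zero[OF m] .
qed

lemma lin_sum:
  assumes "Vector_Spaces.linear scale scale f"
  shows "f (\<Sum>k\<in>K. x k) = (\<Sum>k\<in>K. f (x k))"
proof -
  have m: "module_hom scale scale f" using assms by (simp add: module_hom_iff_linear)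
  show ?thesis using module_hom.sum[OF m] by simp
qed

lemma Mp_bnd:
  assumes "fs c" "bnd r l G"
  shows "bnd r l (Mp scale c i j G)"
proof -
  obtain D where D: "D \<ge> 0" "\<forall>d\<in>supp2 c. - fst d \<le> D \<and> - snd d \<le> D"
    using fs_negbound[OF assms(1)] by blast
  obtain N where N: "\<forall>ns. length ns = r \<longrightarrow> ns ! l < N \<longrightarrow> G ns = 0"
    using assms(2) by (auto simp: bnd_def)
  show ?thesis unfolding bnd_def
  proof (intro exI[of _ "N - 2 * D"] allI impI)
    fix ns :: "int list" assume ns: "length ns = r" "ns ! l < N - 2 * D"
    have "G (ss ns i j d) = 0" if "d \<in> supp2 c" for d
    proof -
      have "ss ns i j d ! l \<le> ns ! l + 2 * D" using D that by (intro nth_ss_le) auto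
      then show ?thesis using N ns by auto
    qed
    then show "Mp scale c i j G ns = 0" by (simp add: Mp_def)
  qed
qed

lemma Mfold_bnd:
  assumes "fs c" "bnd r l G"
  shows "bnd r l (Mfold scale c ps G)"
  using assms(2) by (induction ps arbitrary: G) (auto intro: Mp_bnd[OF assms(1)])

lemma Mp_eqon: "eqon r G H \<Longrightarrow> eqon r (Mp scale c i j G) (Mp scale c i j H)"
  by (auto simp: eqon_def Mp_def)

lemma Mfold_eqon: "eqon r G H \<Longrightarrow> eqon r (Mfold scale c ps G) (Mfold scale c ps H)"
  by (induction ps arbitrary: G H) (auto intro: Mp_eqon)

lemma bnd_sum:
  assumes "finite K" "\<forall>k\<in>K. bnd r l (G k)"
  shows "bnd r l (\<lambda>ns. \<Sum>k\<in>K. G k ns)"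
proof -
  have "\<exists>N. \<forall>k\<in>K. \<forall>ns. length ns = r \<longrightarrow> ns ! l < N \<longrightarrow> G k ns = 0"
    by (rule fin_bound[OF assms(1)]) (use assms(2) in \<open>auto simp: bnd_def\<close>)
  then obtain N where "\<forall>k\<in>K. \<forall>ns. length ns = r \<longrightarrow> ns ! l < N \<longrightarrow> G k ns = 0" by blast
  then show ?thesis unfolding bnd_def by (intro exI[of _ N]) simp
qed

lemma Mp_sum: "Mp scale c i j (\<lambda>ns. \<Sum>k\<in>K. G k ns) = (\<lambda>ns. \<Sum>k\<in>K. Mp scale c i j (G k) ns)"
  unfolding Mp_def scale_sum_right by (rule ext, rule sum.swap)

lemma Mfold_sum: "Mfold scale c ps (\<lambda>ns. \<Sum>k\<in>K. G k ns) = (\<lambda>ns. \<Sum>k\<in>K. Mfold scale c ps (G k) ns)"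
proof (induction ps arbitrary: G)
  case Nil then show ?case by simp
next
  case (Cons p ps)
  show ?case by (simp add: Mp_sum Cons)
qed

lemma Mp_Mfold_comm:
  assumes "fs c" "fs c'"
  shows "Mp scale c i j (Mfold scale c' ps G) = Mfold scale c' ps (Mp scale c i j G)"
proof (induction ps arbitrary: G)
  case (Cons p ps)
  show ?case by (simp only: Mfold_Cons Mp_comm[OF assms] Cons)
qed simp

lemma Mfold_comm:
  assumes "fs c" "fs c'"
  shows "Mfold scale c ps (Mfold scale c' qs G) = Mfold scale c' qs (Mfold scale c ps G)"
proof (induction ps arbitrary: G)
  case (Cons p ps)
  show ?case by (simp only: Mfold_Cons Mp_Mfold_comm[OF assms] Cons)
qed simp

lemma Mfold_compose:
  assumes "fs e" "fs c"
  shows "Mfold scale (conv e c) ps G = Mfold scale e ps (Mfold scale c ps G)"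
proof (induction ps arbitrary: G)
  case Nil then show ?case by simp
next
  case (Cons p ps)
  have "Mp scale (conv e c) (fst p) (snd p) G = Mp scale e (fst p) (snd p) (Mp scale c (fst p) (snd p) G)"
    by (rule ext) (simp add: Mp_compose[OF assms])
  then show ?case by (simp only: Mfold_Cons Cons Mp_Mfold_comm[OF assms(1,2)] Mp_Mfold_comm[OF assms(1) assms(1)])
qed

lemma Mp_Pre:
  assumes "\<forall>n. Vector_Spaces.linear scale scale (a n)"
  shows "Mp scale c (Suc i) (Suc j) (Pre a Y) = Pre a (Mp scale c i j Y)"
proof (rule ext)
  fix ns :: "int list"
  show "Mp scale c (Suc i) (Suc j) (Pre a Y) ns = Pre a (Mp scale c i j Y) ns"
  proof (cases ns)
    case Nil
    then show ?thesis by (simp add: Mp_def Pre_def ss_def sub_def)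
  next
    case (Cons n t)
    have e: "ss (n # t) (Suc i) (Suc j) d = n # ss t i j d" for d
      by (simp add: ss_def sub_def)
    show ?thesis using Cons
      by (simp add: Mp_def Pre_def e lin_sum_scale[OF assms[rule_format]])
  qed
qed

lemma Mfold_Pre:
  assumes "\<forall>n. Vector_Spaces.linear scale scale (a n)"
  shows "Mfold scale c (map (\<lambda>p. (Suc (fst p), Suc (snd p))) ps) (Pre a Y) = Pre a (Mfold scale c ps Y)"
  by (induction ps arbitrary: Y) (simp_all add: Mp_Pre[OF assms])

lemma Pre_bnd:
  assumes "\<forall>n. Vector_Spaces.linear scale scale (a n)" "bnd r l Z"
  shows "bnd (Suc r) (Suc l) (Pre a Z)"
  using assms(2) unfolding bnd_def
proof (elim exE, intro exI allI impI)
  fix N ns assume N: "\<forall>ns. length ns = r \<longrightarrow> ns ! l < N \<longrightarrow> Z ns = 0"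
    and ns: "length ns = Suc r" "ns ! Suc l < N"
  then obtain n t where "ns = n # t" by (cases ns) auto
  with N ns show "Pre a Z ns = 0" by (simp add: Pre_def lin_zero[OF assms(1)[rule_format]])
qed


lemma mult2_range:
  assumes q: "\<forall>d1 d2. q d1 d2 \<noteq> 0 \<longrightarrow> d2 = - d1 \<and> L \<le> d1"
    and K: "\<forall>e b. M < e \<longrightarrow> K (m0 - e) b = 0"
  shows "mult2 scale q K m0 m1 = (\<Sum>e\<in>{L..M}. scale (q e (- e)) (K (m0 - e) (m1 + e)))"
proof -
  let ?h = "\<lambda>e::int. (e, - e)"
  let ?A = "{(d1, d2). q d1 d2 \<noteq> 0 \<and> K (m0 - d1) (m1 - d2) \<noteq> 0}"
  let ?f = "\<lambda>(d1, d2). scale (q d1 d2) (K (m0 - d1) (m1 - d2))"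
  have sub: "?A \<subseteq> ?h ` {L..M}"
  proof
    fix d assume "d \<in> ?A"
    then obtain d1 d2 where d: "d = (d1, d2)" "q d1 d2 \<noteq> 0" "K (m0 - d1) (m1 - d2) \<noteq> 0" by auto
    with q have "d2 = - d1" "L \<le> d1" by auto
    moreover have "d1 \<le> M" using K d by (metis not_le)
    ultimately show "d \<in> ?h ` {L..M}" using d by auto
  qed
  have "mult2 scale q K m0 m1 = sum ?f ?A" by (simp add: mult2_def)
  also have "\<dots> = sum ?f (?h ` {L..M})"
    by (rule sum.mono_neutral_left) (use sub in auto)
  also have "\<dots> = (\<Sum>e\<in>{L..M}. scale (q e (- e)) (K (m0 - e) (m1 + e)))"
    by (subst sum.reindex) (auto simp: inj_on_def)
  finally show ?thesis .
qed

lemma Mp_pwb: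
  assumes "fs c" "pwb n X" "j = Suc jj"
  shows "pwb n (Mp scale c 0 j X)"
  unfolding pwb_def
proof (intro allI impI)
  fix t :: "int list" assume t: "length t = n"
  obtain D where D: "D \<ge> 0" "\<forall>d\<in>supp2 c. - fst d \<le> D \<and> - snd d \<le> D"
    using fs_negbound[OF assms(1)] by blast
  have "\<exists>N. \<forall>t'\<in>(\<lambda>d. sub t jj (snd d)) ` supp2 c. \<forall>a<N. X (a # t') = 0"
    by (rule fin_bound) (use assms(1,2) t in \<open>auto simp: fs_def pwb_def\<close>)
  then obtain N where N: "\<forall>d\<in>supp2 c. \<forall>a<N. X (a # sub t jj (snd d)) = 0" by auto
  have e: "ss (a # t) 0 j d = (a - fst d) # sub t jj (snd d)" for a d
    using assms(3) by (simp add: ss_def sub_def)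
  show "\<exists>N. \<forall>a<N. Mp scale c 0 j X (a # t) = 0"
  proof (intro exI[of _ "N - D"] allI impI)
    fix a assume "a < N - D"
    then have "X ((a - fst d) # sub t jj (snd d)) = 0" if "d \<in> supp2 c" for d
      using N D that by force
    then show "Mp scale c 0 j X (a # t) = 0" by (simp add: Mp_def e)
  qed
qed

lemma Phi_comm:
  assumes c: "fs c" and q: "\<forall>d1 d2. q d1 d2 \<noteq> 0 \<longrightarrow> d2 = - d1 \<and> L \<le> d1"
    and u: "\<forall>n. Vector_Spaces.linear scale scale (u n)"
    and X: "pwb n X" and j: "j = Suc jj"
    and ns: "length ns = Suc (Suc n)"
  shows "Mp scale c 0 (Suc j) (Phi scale u q X) ns = Phi scale u q (Mp scale c 0 j X) ns"
proof -
  obtain m0 m1 t where nsd: "ns = m0 # m1 # t" and t: "length t = n"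
    using ns by (cases ns; cases "tl ns") auto
  define td where "td d = sub t jj (snd d)" for d :: "int \<times> int"
  have ssX: "ss (a # t) 0 j d = (a - fst d) # td d" for a d
    using j by (simp add: ss_def sub_def td_def)
  have ssH: "ss (m0 # m1 # t) 0 (Suc j) d = (m0 - fst d) # m1 # td d" for d
    using j by (simp add: ss_def sub_def td_def)
  obtain D where D: "D \<ge> 0" "\<forall>d\<in>supp2 c. - fst d \<le> D \<and> - snd d \<le> D"
    using fs_negbound[OF c] by blast
  have "\<exists>N. \<forall>t'\<in>td ` supp2 c. \<forall>a<N. X (a # t') = 0"
    by (rule fin_bound) (use c X t in \<open>auto simp: fs_def pwb_def td_def\<close>)
  then obtain N where N: "\<forall>d\<in>supp2 c. \<forall>a<N. X (a # td d) = 0" by auto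
  define M where "M = m0 + D - N"
  have u0: "u b 0 = 0" for b using lin_zero u by blast
  have lhs1: "Phi scale u q X ((m0 - fst d) # m1 # td d) =
      (\<Sum>e\<in>{L..M}. scale (q e (- e)) (u (m1 + e) (X ((m0 - fst d - e) # td d))))"
    if d: "d \<in> supp2 c" for d
    unfolding Phi_def
  proof (simp, rule mult2_range[OF q])
    show "\<forall>e b. M < e \<longrightarrow> u b (X ((m0 - fst d - e) # td d)) = 0"
    proof (intro allI impI)
      fix e b assume "M < e"
      then have "m0 - fst d - e < N" using D d M_def by force
      then show "u b (X ((m0 - fst d - e) # td d)) = 0" using N d u0 by simp
    qed
  qed
  have "Mp scale c 0 (Suc j) (Phi scale u q X) ns =
      (\<Sum>d\<in>supp2 c. scale (c (fst d) (snd d)) (Phi scale u q X ((m0 - fst d) # m1 # td d)))"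
    by (simp add: Mp_def nsd ssH)
  also have "\<dots> = (\<Sum>d\<in>supp2 c. \<Sum>e\<in>{L..M}. scale (c (fst d) (snd d) * q e (- e))
        (u (m1 + e) (X ((m0 - fst d - e) # td d))))"
    by (rule sum.cong[OF refl]) (simp add: lhs1 scale_sum_right)
  also have "\<dots> = (\<Sum>e\<in>{L..M}. \<Sum>d\<in>supp2 c. scale (c (fst d) (snd d) * q e (- e))
        (u (m1 + e) (X ((m0 - fst d - e) # td d))))"
    by (rule sum.swap)
  also have "\<dots> = (\<Sum>e\<in>{L..M}. scale (q e (- e)) (u (m1 + e) (Mp scale c 0 j X ((m0 - e) # t))))"
    by (rule sum.cong[OF refl])
       (simp add: Mp_def ssX lin_sum_scale[OF u[rule_format]] scale_sum_right mult.commute diff_diff_eq add.commute)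
  also have "\<dots> = Phi scale u q (Mp scale c 0 j X) ns"
    unfolding Phi_def nsd
  proof (simp, rule mult2_range[OF q, symmetric])
    show "\<forall>e b. M < e \<longrightarrow> u b (Mp scale c 0 j X ((m0 - e) # t)) = 0"
    proof (intro allI impI)
      fix e b assume "M < e"
      then have "X ((m0 - e - fst d) # td d) = 0" if "d \<in> supp2 c" for d
        using D that M_def N by force
      then show "u b (Mp scale c 0 j X ((m0 - e) # t)) = 0" by (simp add: Mp_def ssX u0)
    qed
  qed
  finally show ?thesis .
qed

lemma Phi_bnd:
  assumes q: "\<forall>d1 d2. q d1 d2 \<noteq> 0 \<longrightarrow> d2 = - d1 \<and> L \<le> d1"
    and u: "\<forall>n. Vector_Spaces.linear scale scale (u n)"
    and K: "\<forall>a t. length t = n \<longrightarrow> a < N \<longrightarrow> K (a # t) = 0"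
  shows "bnd (Suc (Suc n)) 0 (Phi scale u q K)"
  unfolding bnd_def
proof (intro exI[of _ "N + L"] allI impI)
  fix ns :: "int list" assume ns: "length ns = Suc (Suc n)" "ns ! 0 < N + L"
  obtain m0 m1 t where nsd: "ns = m0 # m1 # t" and t: "length t = n"
    using ns by (cases ns; cases "tl ns") auto
  have u0: "u b 0 = 0" for b using lin_zero u by blast
  have "{(d1, d2). q d1 d2 \<noteq> 0 \<and> u (m1 - d2) (K ((m0 - d1) # t)) \<noteq> 0} = {}"
  proof -
    have "u (m1 - d2) (K ((m0 - d1) # t)) = 0" if "q d1 d2 \<noteq> 0" for d1 d2
    proof -
      have "L \<le> d1" using q that by auto
      then have "m0 - d1 < N" using ns nsd by simp
      then show ?thesis using K t u0 by simp
    qed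
    then show ?thesis by auto
  qed
  then show "Phi scale u q K ns = 0"
    apply (simp add: Phi_def mult2_def nsd)
    apply (rule sum.neutral)
    apply auto
    done
qed

lemma Mfold_Phi:
  assumes c: "fs c" and q: "\<forall>d1 d2. q d1 d2 \<noteq> 0 \<longrightarrow> d2 = - d1 \<and> L \<le> d1"
    and u: "\<forall>n. Vector_Spaces.linear scale scale (u n)"
  shows "pwb n X \<Longrightarrow> (\<forall>j\<in>set js. 1 \<le> j) \<Longrightarrow>
    eqon (Suc (Suc n)) (Mfold scale c (map (\<lambda>j. (0, Suc j)) js) (Phi scale u q X))
                       (Phi scale u q (Mfold scale c (map (\<lambda>j. (0, j)) js) X))"
proof (induction js arbitrary: X)
  case Nil then show ?case by (simp add: eqon_def)
next
  case (Cons j js)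
  obtain jj where j: "j = Suc jj" using Cons.prems(2) by (cases j) auto
  have e1: "eqon (Suc (Suc n)) (Mp scale c 0 (Suc j) (Phi scale u q X)) (Phi scale u q (Mp scale c 0 j X))"
    unfolding eqon_def using Phi_comm[OF c q u Cons.prems(1) j] by blast
  have "eqon (Suc (Suc n)) (Mfold scale c (map (\<lambda>j. (0, Suc j)) js) (Mp scale c 0 (Suc j) (Phi scale u q X)))
     (Mfold scale c (map (\<lambda>j. (0, Suc j)) js) (Phi scale u q (Mp scale c 0 j X)))"
    by (rule Mfold_eqon[OF e1])
  moreover have "eqon (Suc (Suc n)) (Mfold scale c (map (\<lambda>j. (0, Suc j)) js) (Phi scale u q (Mp scale c 0 j X)))
      (Phi scale u q (Mfold scale c (map (\<lambda>j. (0, j)) js) (Mp scale c 0 j X)))"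
    by (rule Cons.IH) (use Mp_pwb[OF c Cons.prems(1) j] Cons.prems(2) in auto)
  ultimately show ?case by (simp add: eqon_def)
qed

end

lemma eqon_sym: "eqon r G H \<Longrightarrow> eqon r H G"
  by (auto simp: eqon_def)

lemma eqon_trans: "eqon r G H \<Longrightarrow> eqon r H K \<Longrightarrow> eqon r G K"
  by (auto simp: eqon_def)

lemma EW_D:
  assumes "a \<in> EW scale"
  shows "\<forall>n. Vector_Spaces.linear scale scale (a n)" "\<forall>w. \<exists>N. \<forall>n<N. a n w = 0"
  using assms by (auto simp: EW_def)

lemma AP_mult_all_pairs:
  assumes "fs c" "vector_space s"
  shows "mult_all_pairs s c r G = AP s c r G"
proof -
  interpret cvs s by (rule cvs.intro, rule assms(2))
  have "mult_all_pairs s c r G = fold (\<lambda>p H. Mp s c (fst p) (snd p) H) (pairs r) G"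
    unfolding mult_all_pairs_def pairs_def[symmetric]
  proof (rule fold_cong[OF refl refl])
    fix p assume "p \<in> set (pairs r)"
    then have "fst p \<noteq> snd p" using set_pairs by fastforce
    then show "(\<lambda>(i, j) H. mult_pair s c i j H) p = (\<lambda>H. Mp s c (fst p) (snd p) H)"
      by (cases p) (auto intro!: ext mult_pair_Mp[OF assms(1)])
  qed
  then show ?thesis by (simp add: AP_def Mfold_def)
qed

lemma lower_trunc_from_bnd:
  assumes "\<forall>w. \<forall>l<r. bnd r l (F w)"
  shows "lower_trunc r F"
  unfolding lower_trunc_def
proof
  fix w
  have "\<exists>N. \<forall>l\<in>{..<r}. \<forall>ns. length ns = r \<longrightarrow> ns ! l < N \<longrightarrow> F w ns = 0"
    by (rule fin_bound) (use assms in \<open>auto simp: bnd_def\<close>)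
  then show "\<exists>N. \<forall>ns. length ns = r \<longrightarrow> (\<exists>i<r. ns ! i < N) \<longrightarrow> F w ns = 0"
    by auto
qed

locale fam = cvs scale for scale :: "complex \<Rightarrow> 'w::ab_group_add \<Rightarrow> 'w" +
  fixes I :: "'i set" and le :: "'i \<Rightarrow> 'i \<Rightarrow> bool" and C :: "'i \<Rightarrow> int \<Rightarrow> int \<Rightarrow> complex"
  assumes fsC: "i \<in> I \<Longrightarrow> fs (C i)"
    and le_refl: "i \<in> I \<Longrightarrow> le i i"
    and le_trans: "i \<in> I \<Longrightarrow> j \<in> I \<Longrightarrow> k \<in> I \<Longrightarrow> le i j \<Longrightarrow> le j k \<Longrightarrow> le i k"
    and ub: "i \<in> I \<Longrightarrow> j \<in> I \<Longrightarrow> \<exists>k\<in>I. le i k \<and> le j k"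
    and fac: "i \<in> I \<Longrightarrow> j \<in> I \<Longrightarrow> le i j \<Longrightarrow>
       \<exists>e. fs e \<and> (\<forall>p q G. Mp scale (C j) p q G = Mp scale e p q (Mp scale (C i) p q G))"
    and nonempty: "I \<noteq> {}"
begin

definition loc :: "'w fser set \<Rightarrow> bool" where
  "loc U \<longleftrightarrow> (\<forall>a\<in>U. \<forall>b\<in>U. \<exists>i\<in>I. \<exists>(r::nat) u v q.
     (\<forall>k<r. u k \<in> U \<and> v k \<in> U \<and> qprop (q k)) \<and>
     (\<forall>w m1 m2. mult2 scale (C i) (prod12 a b w) m1 m2 =
        mult2 scale (C i) (\<lambda>n1 n2. \<Sum>k<r. mult2 scale (q k) (prod21 (u k) (v k) w) n1 n2) m1 m2))"

lemma ub_fin: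
  fixes r :: nat and f :: "nat \<Rightarrow> 'i"
  assumes "i0 \<in> I" "\<forall>k<r. f k \<in> I"
  shows "\<exists>m\<in>I. le i0 m \<and> (\<forall>k<r. le (f k) m)"
  using assms(2)
proof (induction r)
  case 0 then show ?case using assms(1) le_refl by auto
next
  case (Suc r)
  then obtain m where m: "m \<in> I" "le i0 m" "\<forall>k<r. le (f k) m" by auto
  obtain m' where m': "m' \<in> I" "le m m'" "le (f r) m'" using ub[OF m(1), of "f r"] Suc.prems by auto
  have "le i0 m'" using le_trans[OF assms(1) m(1) m'(1) m(2) m'(2)] .
  moreover have "le (f k) m'" if "k < Suc r" for k
  proof (cases "k < r")
    case True then show ?thesis using le_trans[of "f k" m m'] m m' Suc.prems by auto
  next
    case False then show ?thesis using that m' by (simp add: less_Suc_eq)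
  qed
  ultimately show ?case using m' by blast
qed

lemma Lclaim:
  fixes a :: "'w fser" and bs :: "'w fser list"
  assumes UE: "U \<subseteq> EW scale" and UL: "loc U"
  shows "set (a # bs) \<subseteq> U \<Longrightarrow> \<exists>i0\<in>I. \<forall>i\<in>I. le i0 i \<longrightarrow>
     (\<forall>w. bnd (length (a # bs)) 0 (M0 scale (C i) (length (a # bs)) (prodr (a # bs) w)))"
proof (induction bs arbitrary: a rule: list.induct)
  case Nil
  obtain i0 where "i0 \<in> I" using nonempty by auto
  moreover have "bnd 1 0 (prodr [a] w)" for w
  proof -
    have aE: "a \<in> EW scale" using Nil UE by auto
    obtain N where N: "\<forall>n<N. a n w = 0" using EW_D(2)[OF aE] by blast
    show ?thesis unfolding bnd_def
    proof (intro exI[of _ N] allI impI)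
      fix ns :: "int list" assume "length ns = 1" "ns ! 0 < N"
      then show "prodr [a] w ns = 0" using N by (cases ns) auto
    qed
  qed
  ultimately show ?case by (auto simp: M0_def)
next
  case (Cons b rest)
  have aU: "a \<in> U" and bU: "b \<in> U" and rU: "set rest \<subseteq> U" using Cons.prems by auto
  obtain iab and r' :: nat and u v q where iab: "iab \<in> I" and uvq: "\<forall>k<r'. u k \<in> U \<and> v k \<in> U \<and> qprop (q k)"
    and eq: "\<forall>w m1 m2. mult2 scale (C iab) (prod12 a b w) m1 m2 =
        mult2 scale (C iab) (\<lambda>n1 n2. \<Sum>k<r'. mult2 scale (q k) (prod21 (u k) (v k) w) n1 n2) m1 m2"
    using UL[unfolded loc_def, rule_format, OF aU bU] by (elim bexE exE conjE) (rule that; assumption)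
  let ?P = "\<lambda>k i0. i0 \<in> I \<and> (\<forall>i\<in>I. le i0 i \<longrightarrow>
     (\<forall>w. bnd (Suc (length rest)) 0 (M0 scale (C i) (Suc (length rest)) (prodr (v k # rest) w))))"
  have "\<forall>k<r'. \<exists>i0. ?P k i0"
  proof (intro allI impI)
    fix k assume "k < r'"
    then have "set (v k # rest) \<subseteq> U" using uvq rU by auto
    from Cons.IH[OF this] show "\<exists>i0. ?P k i0" by auto
  qed
  then have "\<forall>k. \<exists>i0. k < r' \<longrightarrow> ?P k i0" by blast
  from choice[OF this] obtain ik where ik: "\<forall>k<r'. ?P k (ik k)" by blast
  obtain i0 where i0: "i0 \<in> I" "le iab i0" "\<forall>k<r'. le (ik k) i0"
    using ub_fin[OF iab, of r' ik] ik by auto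
  let ?n = "Suc (Suc (length rest))"
  have "\<forall>w. bnd ?n 0 (M0 scale (C i) ?n (prodr (a # b # rest) w))" if iI: "i \<in> I" "le i0 i" for i
  proof
    fix w
    let ?c = "C i" and ?G = "prodr (a # b # rest) w"
    have iab_i: "le iab i" using le_trans[OF iab i0(1) iI(1) i0(2) iI(2)] .
    have fc: "fs ?c" using fsC iI by auto
    have fcab: "fs (C iab)" using fsC iab by auto
    obtain e where e: "fs e" "\<forall>p q G. Mp scale ?c p q G = Mp scale e p q (Mp scale (C iab) p q G)"
      using fac[OF iab iI(1) iab_i] by blast
    define Hs where "Hs = (\<lambda>ns. \<Sum>k<r'. Phi scale (u k) (q k) (prodr (v k # rest) w) ns)"
    have s1: "eqon ?n (Mp scale (C iab) 0 1 ?G) (Mp scale (C iab) 0 1 Hs)"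
      unfolding eqon_def
    proof (intro allI impI)
      fix ns :: "int list" assume "length ns = ?n"
      then obtain m0 m1 t where nsd: "ns = m0 # m1 # t" by (cases ns; cases "tl ns") auto
      have g: "(\<lambda>x y. ?G (x # y # t)) = prod12 a b (prodr rest w t)"
        by (intro ext) (simp add: prod12_def)
      have h: "(\<lambda>x y. Hs (x # y # t)) =
          (\<lambda>n1 n2. \<Sum>k<r'. mult2 scale (q k) (prod21 (u k) (v k) (prodr rest w t)) n1 n2)"
        by (simp add: Hs_def Phi_def prod21_def[abs_def])
      show "Mp scale (C iab) 0 1 ?G ns = Mp scale (C iab) 0 1 Hs ns"
        unfolding nsd Mp01_mult2[OF fcab] g h using eq by simp
    qed
    have s2: "eqon ?n (Mp scale ?c 0 1 ?G) (Mp scale ?c 0 1 Hs)"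
      using Mp_eqon[OF s1] e(2) by simp
    define js2 where "js2 = map (\<lambda>j. (0::nat, j)) [2..<?n]"
    have upt: "[1..<?n] = 1 # [2..<?n]"
      using upt_conv_Cons[of 1 ?n] by (simp add: numeral_2_eq_2 del: upt_Suc)
    have m0: "M0 scale ?c ?n ?G = Mfold scale ?c js2 (Mp scale ?c 0 1 ?G)"
      by (simp only: M0_def upt js2_def list.map Mfold_Cons fst_conv snd_conv)
    have s3: "eqon ?n (M0 scale ?c ?n ?G) (Mp scale ?c 0 1 (Mfold scale ?c js2 Hs))"
      unfolding m0 Mp_Mfold_comm[OF fc fc] by (rule Mfold_eqon[OF s2])
    have js2': "js2 = map (\<lambda>j. (0, Suc j)) [1..<Suc (length rest)]"
    proof -
      have X: "[2..<?n] = map Suc [1..<Suc (length rest)]"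
        using map_Suc_upt[of 1 "Suc (length rest)"] by (simp add: numeral_2_eq_2)
      show ?thesis by (simp only: js2_def X map_map comp_def)
    qed
    have bk: "bnd ?n 0 (Mfold scale ?c js2 (Phi scale (u k) (q k) (prodr (v k # rest) w)))"
      if k: "k < r'" for k
    proof -
      let ?X = "prodr (v k # rest) w"
      have vE: "v k \<in> EW scale" "u k \<in> EW scale" using uvq k UE by auto
      have "qprop (q k)" using uvq k by blast
      then obtain L where L: "\<forall>d1 d2. q k d1 d2 \<noteq> 0 \<longrightarrow> d2 = - d1 \<and> L \<le> d1"
        unfolding qprop_def by blast
      have pX: "pwb (length rest) ?X"
        unfolding pwb_def
      proof (intro allI impI)
        fix t :: "int list"
        obtain N where "\<forall>n<N. v k n (prodr rest w t) = 0" using EW_D(2)[OF vE(1)] by blast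
        then show "\<exists>N. \<forall>a<N. ?X (a # t) = 0" by auto
      qed
      have E: "eqon ?n (Mfold scale ?c js2 (Phi scale (u k) (q k) ?X))
           (Phi scale (u k) (q k) (M0 scale ?c (Suc (length rest)) ?X))"
        unfolding js2' M0_def by (rule Mfold_Phi[OF fc L EW_D(1)[OF vE(2)] pX]) (simp del: upt_Suc)
      have "le (ik k) i" using le_trans[of "ik k" i0 i] ik i0 iI k by auto
      then have "bnd (Suc (length rest)) 0 (M0 scale ?c (Suc (length rest)) ?X)"
        using ik iI k by auto
      then obtain N where N: "\<forall>ns. length ns = Suc (length rest) \<longrightarrow> ns ! 0 < N \<longrightarrow>
           M0 scale ?c (Suc (length rest)) ?X ns = 0" by (auto simp: bnd_def)
      have "bnd ?n 0 (Phi scale (u k) (q k) (M0 scale ?c (Suc (length rest)) ?X))"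
        by (rule Phi_bnd[OF L EW_D(1)[OF vE(2)], of "length rest" N]) (use N in auto)
      then show ?thesis using bnd_eqon[OF eqon_sym[OF E]] by blast
    qed
    have "bnd ?n 0 (Mfold scale ?c js2 Hs)"
      unfolding Hs_def Mfold_sum by (rule bnd_sum) (use bk in auto)
    then have "bnd ?n 0 (Mp scale ?c 0 1 (Mfold scale ?c js2 Hs))" by (rule Mp_bnd[OF fc])
    then show "bnd ?n 0 (M0 scale ?c ?n ?G)" using bnd_eqon[OF eqon_sym[OF s3]] by blast
  qed
  then show ?case using i0(1) by auto
qed

lemma Fullclaim:
  assumes UE: "U \<subseteq> EW scale" and UL: "loc U"
  shows "set as \<subseteq> U \<Longrightarrow> \<exists>i0\<in>I. \<forall>i\<in>I. le i0 i \<longrightarrow>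
     (\<forall>w. \<forall>l<length as. bnd (length as) l (AP scale (C i) (length as) (prodr as w)))"
proof (induction as)
  case Nil
  then show ?case using nonempty by auto
next
  case (Cons a bs)
  obtain i1 where i1: "i1 \<in> I" "\<forall>i\<in>I. le i1 i \<longrightarrow>
     (\<forall>w. bnd (length (a # bs)) 0 (M0 scale (C i) (length (a # bs)) (prodr (a # bs) w)))"
    using Lclaim[OF UE UL Cons.prems] by blast
  obtain i2 where i2: "i2 \<in> I" "\<forall>i\<in>I. le i2 i \<longrightarrow>
     (\<forall>w. \<forall>l<length bs. bnd (length bs) l (AP scale (C i) (length bs) (prodr bs w)))"
    using Cons.IH Cons.prems by auto
  obtain i0 where i0: "i0 \<in> I" "le i1 i0" "le i2 i0" using ub[OF i1(1) i2(1)] by blast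
  have aE: "a \<in> EW scale" using Cons.prems UE by auto
  have "\<forall>w. \<forall>l<length (a # bs). bnd (length (a # bs)) l (AP scale (C i) (length (a # bs)) (prodr (a # bs) w))"
    if iI: "i \<in> I" "le i0 i" for i
  proof (intro allI impI)
    fix w l assume l: "l < length (a # bs)"
    let ?c = "C i" and ?R = "length bs" and ?G = "prodr (a # bs) w"
    let ?sh = "map (\<lambda>p. (Suc (fst p), Suc (snd p))) (pairs ?R)"
    let ?zs = "map (\<lambda>j. (0::nat, j)) [1..<Suc ?R]"
    have fc: "fs ?c" using fsC iI by auto
    have li1: "le i1 i" using le_trans[OF i1(1) i0(1) iI(1) i0(2) iI(2)] .
    have li2: "le i2 i" using le_trans[OF i2(1) i0(1) iI(1) i0(3) iI(2)] .
    have ap: "AP scale ?c (Suc ?R) ?G = Mfold scale ?c ?sh (M0 scale ?c (Suc ?R) ?G)"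
      by (rule AP_Suc)
    show "bnd (length (a # bs)) l (AP scale ?c (length (a # bs)) ?G)"
    proof (cases l)
      case 0
      have "bnd (Suc ?R) 0 (M0 scale ?c (Suc ?R) ?G)" using i1 iI li1 by auto
      then show ?thesis using 0 ap Mfold_bnd[OF fc] by simp
    next
      case (Suc l')
      have eG: "eqon (Suc ?R) ?G (Pre a (prodr bs w))"
        unfolding eqon_def
      proof (intro allI impI)
        fix ns :: "int list" assume "length ns = Suc ?R"
        then show "?G ns = Pre a (prodr bs w) ns" by (cases ns) (auto simp: Pre_def)
      qed
      have "bnd ?R l' (AP scale ?c ?R (prodr bs w))" using i2 iI li2 l Suc by auto
      then have "bnd (Suc ?R) (Suc l') (Pre a (AP scale ?c ?R (prodr bs w)))"
        by (rule Pre_bnd[OF EW_D(1)[OF aE]])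
      then have "bnd (Suc ?R) (Suc l') (Mfold scale ?c ?sh (Pre a (prodr bs w)))"
        by (simp add: Mfold_Pre[OF EW_D(1)[OF aE]] AP_def)
      then have "bnd (Suc ?R) (Suc l') (Mfold scale ?c ?sh ?G)"
        using bnd_eqon[OF eqon_sym[OF Mfold_eqon[OF eG]]] by blast
      then have "bnd (Suc ?R) (Suc l') (Mfold scale ?c ?zs (Mfold scale ?c ?sh ?G))"
        by (rule Mfold_bnd[OF fc])
      then show ?thesis using ap Suc Mfold_comm[OF fc fc, of ?sh ?zs] by (simp add: M0_def)
    qed
  qed
  then show ?case using i0(1) by blast
qed

lemma final:
  assumes UE: "U \<subseteq> EW scale" and UL: "loc U" and as: "set as \<subseteq> U"
  shows "\<exists>i\<in>I. lower_trunc (length as) (\<lambda>w. AP scale (C i) (length as) (prodr as w))"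
proof -
  obtain i0 where i0: "i0 \<in> I" "\<forall>i\<in>I. le i0 i \<longrightarrow>
     (\<forall>w. \<forall>l<length as. bnd (length as) l (AP scale (C i) (length as) (prodr as w)))"
    using Fullclaim[OF UE UL as] by blast
  then have "\<forall>w l. l < length as \<longrightarrow> bnd (length as) l (AP scale (C i0) (length as) (prodr as w))"
    using le_refl by auto
  then have "lower_trunc (length as) (\<lambda>w. AP scale (C i0) (length as) (prodr as w))"
    by (intro lower_trunc_from_bnd) blast
  then show ?thesis using i0(1) by blast
qed

lemma finalb:
  assumes UE: "U \<subseteq> EW scale" and UL: "loc U" and as: "set as \<subseteq> U"
  shows "\<exists>i\<in>I. \<forall>w. \<forall>l<length as. bnd (length as) l (AP scale (C i) (length as) (prodr as w))"
proof -
  obtain i0 where i0: "i0 \<in> I" "\<forall>i\<in>I. le i0 i \<longrightarrow>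
     (\<forall>w. \<forall>l<length as. bnd (length as) l (AP scale (C i) (length as) (prodr as w)))"
    using Fullclaim[OF UE UL as] by blast
  then show ?thesis using le_refl by blast
qed

end

lemma binom2_pascal: "binom2 m (f1 - 1) f2 - binom2 m f1 (f2 - 1) = binom2 (Suc m) f1 f2"
proof (cases "0 \<le> f1 \<and> 0 \<le> f2 \<and> f1 + f2 = int (Suc m)")
  case False
  then show ?thesis by (auto simp: binom2_def)
next
  case True
  then obtain b where b: "f2 = int b" by (metis nonneg_int_cases)
  show ?thesis
  proof (cases b)
    case 0
    then show ?thesis using True b by (simp add: binom2_def)
  next
    case (Suc b')
    have f1: "f1 = int m - int b'" using True b Suc by simp
    have nb: "nat f2 = Suc b'" "nat (f2 - 1) = b'" using b Suc by auto
    show ?thesis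
    proof (cases "b' < m")
      case True
      then show ?thesis using f1 b Suc nb by (simp add: binom2_def algebra_simps)
    next
      case False
      then have "b' = m" using True f1 \<open>0 \<le> f1 \<and> 0 \<le> f2 \<and> f1 + f2 = int (Suc m)\<close> by linarith
      then show ?thesis using f1 b Suc nb by (simp add: binom2_def algebra_simps)
    qed
  qed
qed

lemma supp2_binom1: "supp2 (binom2 1) = {(1, 0), (0, 1)}"
proof -
  have "binom2 1 d1 d2 \<noteq> 0 \<longleftrightarrow> (d1 = 1 \<and> d2 = 0) \<or> (d1 = 0 \<and> d2 = 1)" for d1 d2
  proof
    assume "binom2 1 d1 d2 \<noteq> 0"
    then have "0 \<le> d1" "0 \<le> d2" "d1 + d2 = 1" by (auto simp: binom2_def split: if_splits)
    then show "(d1 = 1 \<and> d2 = 0) \<or> (d1 = 0 \<and> d2 = 1)" by linarith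
  next
    assume "(d1 = 1 \<and> d2 = 0) \<or> (d1 = 0 \<and> d2 = 1)"
    then show "binom2 1 d1 d2 \<noteq> 0" by (auto simp: binom2_def)
  qed
  then show ?thesis by (auto simp: supp2_def)
qed

lemma supp2_binom0: "supp2 (binom2 0) = {(0, 0)}"
  by (auto simp: supp2_def binom2_def)

lemma fs_binom2: "fs (binom2 k)"
proof -
  have "supp2 (binom2 k) \<subseteq> {0..int k} \<times> {0..int k}"
    by (auto simp: supp2_def binom2_def split: if_splits)
  then show ?thesis unfolding fs_def by (rule finite_subset) auto
qed

lemma conv_binom: "conv (binom2 1) (binom2 m) = binom2 (Suc m)"
proof (intro ext)
  fix f1 f2
  have b10: "binom2 1 1 0 = 1" and b01: "binom2 1 0 1 = -1" by (simp_all add: binom2_def)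
  have "conv (binom2 1) (binom2 m) f1 f2 = binom2 1 1 0 * binom2 m (f1 - 1) (f2 - 0) + binom2 1 0 1 * binom2 m (f1 - 0) (f2 - 1)"
    unfolding conv_def supp2_binom1 by simp
  also have "\<dots> = binom2 m (f1 - 1) f2 - binom2 m f1 (f2 - 1)"
    by (simp only: b10 b01) simp
  finally have "conv (binom2 1) (binom2 m) f1 f2 = binom2 m (f1 - 1) f2 - binom2 m f1 (f2 - 1)" .
  then show "conv (binom2 1) (binom2 m) f1 f2 = binom2 (Suc m) f1 f2" by (simp add: binom2_pascal)
qed

lemma ss_zero: "ss ns i j (0, 0) = ns"
  by (simp add: ss_def sub_def)

context cvs
begin

lemma Mp_binom0: "Mp scale (binom2 0) p q G = G"
  by (rule ext) (simp add: Mp_def supp2_binom0 ss_zero binom2_def)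

lemma Mp_binom_add: "Mp scale (binom2 (m + k)) p q G = Mp scale (binom2 m) p q (Mp scale (binom2 k) p q G)"
proof (induction m arbitrary: G)
  case 0 then show ?case by (simp add: Mp_binom0)
next
  case (Suc m)
  have "Mp scale (binom2 (Suc m + k)) p q G = Mp scale (conv (binom2 1) (binom2 (m + k))) p q G"
    by (simp only: conv_binom add_Suc)
  also have "\<dots> = Mp scale (binom2 1) p q (Mp scale (binom2 (m + k)) p q G)"
    by (rule ext) (simp add: Mp_compose[OF fs_binom2 fs_binom2])
  also have "\<dots> = Mp scale (binom2 1) p q (Mp scale (binom2 m) p q (Mp scale (binom2 k) p q G))"
    by (simp add: Suc)
  also have "\<dots> = Mp scale (conv (binom2 1) (binom2 m)) p q (Mp scale (binom2 k) p q G)"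
    by (rule ext) (simp add: Mp_compose[OF fs_binom2 fs_binom2])
  finally show ?case by (simp only: conv_binom)
qed

end

lemma ex_ub: "\<exists>k\<ge>(i::nat). j \<le> k"
  by (rule exI[of _ "max i j"]) simp

lemma fam_binom:
  assumes "vector_space scale"
  shows "fam scale (UNIV :: nat set) (\<le>) binom2"
proof -
  interpret cvs scale by (rule cvs.intro[OF assms])
  show ?thesis
  proof (unfold_locales)
    fix i j :: nat assume "i \<le> j"
    then have "j = (j - i) + i" by simp
    then show "\<exists>e. fs e \<and> (\<forall>p q G. Mp scale (binom2 j) p q G = Mp scale e p q (Mp scale (binom2 i) p q G))"
      by (metis Mp_binom_add fs_binom2)
  qed (auto simp: fs_binom2 intro: ex_ub)
qed

lemma qprop_iota: "qprop (iota21 f g)"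
  unfolding qprop_def
  by (intro exI[of _ "fls_subdegree (rat_expand f g)"]) (auto simp: iota21_def intro: fls_subdegree_leI split: if_splits)

lemma compat_part:
  fixes scale :: "complex \<Rightarrow> 'w::ab_group_add \<Rightarrow> 'w"
  assumes vs: "vector_space scale" and UE: "U \<subseteq> EW scale" and SL: "strig_local scale U"
  shows "compatible_set scale U"
proof -
  interpret fam scale "UNIV :: nat set" "(\<le>)" binom2 by (rule fam_binom[OF vs])
  have L: "loc U" unfolding loc_def
  proof (intro ballI)
    fix a b assume ab: "a \<in> U" "b \<in> U"
    from SL[unfolded strig_local_def, rule_format, OF ab] obtain r :: nat and u v :: "nat \<Rightarrow> 'w fser" and f g :: "nat \<Rightarrow> complex poly" and k :: nat where
      H: "\<forall>i<r. u i \<in> U \<and> v i \<in> U \<and> g i \<noteq> 0"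
         "\<forall>w m1 m2. mult2 scale (binom2 k) (prod12 a b w) m1 m2 =
           mult2 scale (binom2 k)
             (\<lambda>n1 n2. \<Sum>i<r. mult2 scale (iota21 (f i) (g i)) (prod21 (u i) (v i) w) n1 n2) m1 m2"
      by blast
    show "\<exists>i\<in>UNIV. \<exists>(r::nat) u v q. (\<forall>k<r. u k \<in> U \<and> v k \<in> U \<and> qprop (q k)) \<and>
     (\<forall>w m1 m2. mult2 scale (binom2 i) (prod12 a b w) m1 m2 =
        mult2 scale (binom2 i) (\<lambda>n1 n2. \<Sum>k<r. mult2 scale (q k) (prod21 (u k) (v k) w) n1 n2) m1 m2)"
      apply (rule bexI[where x=k], rule exI[where x=r], rule exI[where x=u], rule exI[where x=v],
             rule exI[where x="\<lambda>i. iota21 (f i) (g i)"])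
      using H by (auto simp: qprop_iota)
  qed
  show ?thesis unfolding compatible_set_def compatible_seq_def
  proof (intro allI impI)
    fix as assume "set as \<subseteq> U"
    from final[OF UE L this] obtain k where
      "lower_trunc (length as) (\<lambda>w. AP scale (binom2 k) (length as) (prodr as w))" by blast
    then show "\<exists>k. lower_trunc (length as) (\<lambda>w. mult_all_pairs scale (binom2 k) (length as) (prodr as w))"
      by (intro exI[where x=k]) (simp add: AP_mult_all_pairs[OF fs_binom2 vs])
  qed
qed

lemma fs_polyz: "fs (polyz q)"
proof -
  have "supp2 (polyz q) \<subseteq> (\<lambda>n. (int n, - int n)) ` {..degree q}"
  proof
    fix d assume "d \<in> supp2 (polyz q)"
    then have d: "0 \<le> fst d" "snd d = - fst d" "coeff q (nat (fst d)) \<noteq> 0"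
      by (auto simp: supp2_def polyz_def split: if_splits)
    then have "nat (fst d) \<le> degree q" using le_degree by blast
    then show "d \<in> (\<lambda>n. (int n, - int n)) ` {..degree q}"
      using d by (intro image_eqI[of _ _ "nat (fst d)"]) (auto simp: prod_eq_iff)
  qed
  then show ?thesis unfolding fs_def by (rule finite_subset) auto
qed

lemma conv_superset:
  assumes "finite T" "supp2 c \<subseteq> T"
  shows "conv c c' f1 f2 = (\<Sum>d\<in>T. c (fst d) (snd d) * c' (f1 - fst d) (f2 - snd d))"
  unfolding conv_def
  by (rule sum.mono_neutral_left) (use assms in \<open>auto simp: supp2_def\<close>)

lemma conv_polyz: "conv (polyz s) (polyz q) = polyz (s * q)"
proof (intro ext)
  fix f1 f2
  let ?T = "(\<lambda>n. (int n, - int n)) ` {..degree s}"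
  have sT: "supp2 (polyz s) \<subseteq> ?T"
  proof
    fix d assume "d \<in> supp2 (polyz s)"
    then have d: "0 \<le> fst d" "snd d = - fst d" "coeff s (nat (fst d)) \<noteq> 0"
      by (auto simp: supp2_def polyz_def split: if_splits)
    then have "nat (fst d) \<le> degree s" using le_degree by blast
    then show "d \<in> ?T"
      using d by (intro image_eqI[of _ _ "nat (fst d)"]) (auto simp: prod_eq_iff)
  qed
  have "conv (polyz s) (polyz q) f1 f2 = (\<Sum>d\<in>?T. polyz s (fst d) (snd d) * polyz q (f1 - fst d) (f2 - snd d))"
    by (rule conv_superset[OF _ sT]) auto
  also have "\<dots> = (\<Sum>n\<le>degree s. coeff s n * polyz q (f1 - int n) (f2 + int n))"
    by (subst sum.reindex) (auto simp: inj_on_def polyz_def intro!: sum.cong)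
  also have "\<dots> = polyz (s * q) f1 f2"
  proof (cases "0 \<le> f1 \<and> f2 = - f1")
    case False
    then have "polyz q (f1 - int n) (f2 + int n) = 0" for n by (auto simp: polyz_def)
    then show ?thesis using False by (auto simp: polyz_def)
  next
    case True
    then obtain m where m: "f1 = int m" by (metis nonneg_int_cases)
    let ?h = "\<lambda>n. coeff s n * (if n \<le> m then coeff q (m - n) else 0)"
    have "(\<Sum>n\<le>degree s. coeff s n * polyz q (f1 - int n) (f2 + int n)) = (\<Sum>n\<le>degree s. ?h n)"
      by (rule sum.cong) (use True m in \<open>auto simp: polyz_def nat_diff_distrib\<close>)
    also have "\<dots> = (\<Sum>n\<le>max (degree s) m. ?h n)"
      by (rule sum.mono_neutral_left) (auto simp: coeff_eq_0)
    also have "\<dots> = (\<Sum>n\<le>m. ?h n)"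
      by (rule sum.mono_neutral_right) auto
    also have "\<dots> = coeff (s * q) m" by (simp add: coeff_mult)
    finally show ?thesis using True m by (simp add: polyz_def)
  qed
  finally show "conv (polyz s) (polyz q) f1 f2 = polyz (s * q) f1 f2" .
qed

lemma fam_polyz:
  assumes "vector_space scale"
  shows "fam scale {q :: complex poly. q \<noteq> 0} (dvd) polyz"
proof -
  interpret cvs scale by (rule cvs.intro[OF assms])
  show ?thesis
  proof (unfold_locales)
    fix i j :: "complex poly" assume "i dvd j"
    then obtain k where k: "j = k * i" by (metis dvd_def mult.commute)
    have "Mp scale (polyz j) p q G = Mp scale (polyz k) p q (Mp scale (polyz i) p q G)" for p q G
      by (rule ext) (simp add: Mp_compose[OF fs_polyz fs_polyz] conv_polyz k)
    then show "\<exists>e. fs e \<and> (\<forall>p q G. Mp scale (polyz j) p q G = Mp scale e p q (Mp scale (polyz i) p q G))"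
      using fs_polyz by blast
  next
    fix i j :: "complex poly" assume "i \<in> {q. q \<noteq> 0}" "j \<in> {q. q \<noteq> 0}"
    then show "\<exists>k\<in>{q. q \<noteq> 0}. i dvd k \<and> j dvd k" by (intro bexI[of _ "i * j"]) auto
  qed (auto simp: fs_polyz intro: dvd_trans exI[of _ 1])
qed

definition mono2 :: "nat \<Rightarrow> int \<Rightarrow> int \<Rightarrow> complex" where
  "mono2 D d1 d2 = (if d1 = 0 \<and> d2 = int D then 1 else 0)"

lemma supp2_mono2: "supp2 (mono2 D) = {(0, int D)}"
  by (auto simp: supp2_def mono2_def)

lemma fs_mono2: "fs (mono2 D)"
  by (simp add: fs_def supp2_mono2)

lemma pser2_conv:
  fixes Q :: "complex poly"
  defines "P \<equiv> \<lambda>a b. if a + b = degree Q then coeff Q a else 0"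
  shows "pser2 P = conv (mono2 (degree Q)) (polyz Q)"
proof (intro ext)
  fix f1 f2
  have c: "conv (mono2 (degree Q)) (polyz Q) f1 f2 = polyz Q f1 (f2 - int (degree Q))"
    by (simp add: conv_def supp2_mono2 mono2_def)
  show "pser2 P f1 f2 = conv (mono2 (degree Q)) (polyz Q) f1 f2"
    unfolding c
  proof (cases "0 \<le> f1")
    case False then show "pser2 P f1 f2 = polyz Q f1 (f2 - int (degree Q))"
      by (simp add: pser2_def polyz_def)
  next
    case True
    then obtain a where a: "f1 = int a" by (metis nonneg_int_cases)
    show "pser2 P f1 f2 = polyz Q f1 (f2 - int (degree Q))"
    proof (cases "0 \<le> f2")
      case True
      then obtain b where b: "f2 = int b" by (metis nonneg_int_cases)
      show ?thesis using a b by (auto simp: pser2_def polyz_def P_def)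
    next
      case False
      have "coeff Q a = 0" if "f2 - int (degree Q) = - f1"
        using that a False by (intro coeff_eq_0) linarith
      then show ?thesis using False a by (auto simp: pser2_def polyz_def)
    qed
  qed
qed

lemma quasi_part:
  fixes scale :: "complex \<Rightarrow> 'w::ab_group_add \<Rightarrow> 'w"
  assumes vs: "vector_space scale" and UE: "U \<subseteq> EW scale" and SL: "quasi_strig_local scale U"
  shows "quasi_compatible_set scale U"
proof -
  interpret fam scale "{q :: complex poly. q \<noteq> 0}" "(dvd)" polyz by (rule fam_polyz[OF vs])
  have L: "loc U" unfolding loc_def
  proof (intro ballI)
    fix a b assume ab: "a \<in> U" "b \<in> U"
    from SL[unfolded quasi_strig_local_def, rule_format, OF ab] obtain p :: "complex poly" and r :: nat and u v :: "nat \<Rightarrow> 'w fser" and f g :: "nat \<Rightarrow> complex poly" where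
      H: "p \<noteq> 0" "\<forall>i<r. u i \<in> U \<and> v i \<in> U \<and> g i \<noteq> 0"
         "\<forall>w m1 m2. mult2 scale (polyz p) (prod12 a b w) m1 m2 =
           mult2 scale (polyz p)
             (\<lambda>n1 n2. \<Sum>i<r. mult2 scale (iota21 (f i) (g i)) (prod21 (u i) (v i) w) n1 n2) m1 m2"
      by blast
    show "\<exists>i\<in>{q. q \<noteq> 0}. \<exists>(r::nat) u v q. (\<forall>k<r. u k \<in> U \<and> v k \<in> U \<and> qprop (q k)) \<and>
     (\<forall>w m1 m2. mult2 scale (polyz i) (prod12 a b w) m1 m2 =
        mult2 scale (polyz i) (\<lambda>n1 n2. \<Sum>k<r. mult2 scale (q k) (prod21 (u k) (v k) w) n1 n2) m1 m2)"
      apply (rule bexI[where x=p], rule exI[where x=r], rule exI[where x=u], rule exI[where x=v],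
             rule exI[where x="\<lambda>i. iota21 (f i) (g i)"])
      using H by (auto simp: qprop_iota)
  qed
  show ?thesis unfolding quasi_compatible_set_def quasi_compatible_seq_def
  proof (intro allI impI)
    fix as assume "set as \<subseteq> U"
    from finalb[OF UE L this] obtain Q where Q: "Q \<noteq> 0"
      "\<forall>w. \<forall>l<length as. bnd (length as) l (AP scale (polyz Q) (length as) (prodr as w))" by blast
    define P where "P = (\<lambda>a b. if a + b = degree Q then coeff Q a else 0)"
    have Pc: "pser2 P = conv (mono2 (degree Q)) (polyz Q)" unfolding P_def by (rule pser2_conv)
    have fsP: "fs (pser2 P)"
    proof -
      have "supp2 (pser2 P) \<subseteq> {0..int (degree Q)} \<times> {0..int (degree Q)}"
        by (auto simp: supp2_def pser2_def P_def split: if_splits)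
      then show ?thesis unfolding fs_def by (rule finite_subset) auto
    qed
    have "\<forall>w. \<forall>l<length as. bnd (length as) l (AP scale (pser2 P) (length as) (prodr as w))"
      unfolding Pc AP_def Mfold_compose[OF fs_mono2 fs_polyz]
      using Q(2) Mfold_bnd[OF fs_mono2] unfolding AP_def by blast
    then have "lower_trunc (length as) (\<lambda>w. AP scale (pser2 P) (length as) (prodr as w))"
      by (intro lower_trunc_from_bnd) blast
    moreover have "P (degree Q) 0 \<noteq> 0" using Q(1) by (simp add: P_def)
    ultimately show "\<exists>p. (\<exists>a b. p a b \<noteq> 0) \<and>
       lower_trunc (length as) (\<lambda>w. mult_all_pairs scale (pser2 p) (length as) (prodr as w))"
      by (intro exI[of _ P]) (auto simp: AP_mult_all_pairs[OF fsP vs])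
  qed
qed

theorem lemma5p2:
  fixes scale :: "complex \<Rightarrow> 'w::ab_group_add \<Rightarrow> 'w"
  assumes "vector_space scale"
  shows "(\<forall>U. U \<subseteq> EW scale \<and> strig_local scale U \<longrightarrow> compatible_set scale U) \<and>
         (\<forall>U. U \<subseteq> EW scale \<and> quasi_strig_local scale U \<longrightarrow> quasi_compatible_set scale U)"
  using compat_part[OF assms] quasi_part[OF assms] by blast

end
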